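(* Let $\theta^*$ be an optimal solution of OPT and let $m^*(t)$ be the number of jobs not yet completed at time $t$ under $\theta^*$. For any two times $t_1,t_2>0$, if $m^*(t_1)=m^*(t_2)$ then $\theta_i^*(t_1)=\theta_i^*(t_2)$ for all $i=1,\dots,M$.
   Context: Setting (problem OPT). There are $M$ jobs, all available at time $0$, with sizes $x_1\ge x_2\ge\cdots\ge x_M>0$ and weights $0<w_1\le w_2\le\cdots\le w_M$. A total resource $B>0$ is shared. The speedup function $s:[0,B]\to[0,\infty)$ satisfies: $s(0)=0$; $s$ is strictly increasing, strictly concave, differentiable, and $s'$ is continuous on $[0,B]$. A schedule consists of functions $\theta_i:(0,\infty)\to[0,B]$, $i=1,\dots,M$, each right-continuous in $t$, with $\sum_{i=1}^M\theta_i(t)\le B$ for all $t>0$. The service received by job $i$ on $[t_1,t_2]$ is $Q_i(t_1,t_2)=\int_{t_1}^{t_2}s(\theta_i(t))\,dt$. The completion time $T_i$ of job $i$ satisfies $Q_i(0,T_i)=x_i$, and $\theta_i(t)=0$ for $t>T_i$. OPT is the problem of choosing a schedule minimizing $J=\sum_{i=1}^M w_iT_i$. An optimal solution is a feasible schedule attaining the minimum. *)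

theory Defs
  imports "HOL-Analysis.Analysis"
begin

definition strict_concave_on :: "real set \<Rightarrow> (real \<Rightarrow> real) \<Rightarrow> bool" where
  "strict_concave_on S f \<longleftrightarrow> convex S \<and>
     (\<forall>x\<in>S. \<forall>y\<in>S. x \<noteq> y \<longrightarrow> (\<forall>u. 0 < u \<and> u < 1 \<longrightarrow>
        f (u * x + (1 - u) * y) > u * f x + (1 - u) * f y))"

definition speedup_fn :: "real \<Rightarrow> (real \<Rightarrow> real) \<Rightarrow> bool" where
  "speedup_fn B s \<longleftrightarrow> s 0 = 0 \<and> strict_mono_on {0..B} s \<and> strict_concave_on {0..B} s \<and>
     (\<exists>s'. (\<forall>y\<in>{0..B}. (s has_real_derivative s' y) (at y within {0..B})) \<and>
           continuous_on {0..B} s')"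

definition feasible_schedule ::
  "nat \<Rightarrow> real \<Rightarrow> (real \<Rightarrow> real) \<Rightarrow> (nat \<Rightarrow> real) \<Rightarrow>
   (nat \<Rightarrow> real \<Rightarrow> real) \<Rightarrow> (nat \<Rightarrow> real) \<Rightarrow> bool" where
  "feasible_schedule M B s x \<theta> T \<longleftrightarrow>
     (\<forall>i\<in>{1..M}. \<forall>t>0. 0 \<le> \<theta> i t \<and> \<theta> i t \<le> B) \<and>
     (\<forall>t>0. (\<Sum>i=1..M. \<theta> i t) \<le> B) \<and>
     (\<forall>i\<in>{1..M}. \<forall>t>0. continuous (at_right t) (\<theta> i)) \<and>
     (\<forall>i\<in>{1..M}. ((\<lambda>t. s (\<theta> i t)) has_integral x i) {0..T i}) \<and>
     (\<forall>i\<in>{1..M}. \<forall>t>T i. \<theta> i t = 0)"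

definition total_cost :: "nat \<Rightarrow> (nat \<Rightarrow> real) \<Rightarrow> (nat \<Rightarrow> real) \<Rightarrow> real" where
  "total_cost M w T = (\<Sum>i=1..M. w i * T i)"

definition optimal_schedule ::
  "nat \<Rightarrow> real \<Rightarrow> (real \<Rightarrow> real) \<Rightarrow> (nat \<Rightarrow> real) \<Rightarrow> (nat \<Rightarrow> real) \<Rightarrow>
   (nat \<Rightarrow> real \<Rightarrow> real) \<Rightarrow> (nat \<Rightarrow> real) \<Rightarrow> bool" where
  "optimal_schedule M B s x w \<theta> T \<longleftrightarrow> feasible_schedule M B s x \<theta> T \<and>
     (\<forall>\<theta>' T'. feasible_schedule M B s x \<theta>' T' \<longrightarrow> total_cost M w T \<le> total_cost M w T')"

definition remaining_jobs :: "nat \<Rightarrow> (nat \<Rightarrow> real) \<Rightarrow> real \<Rightarrow> nat" where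
  "remaining_jobs M T t = card {i\<in>{1..M}. t < T i}"

end

theory Submission
  imports Defs
begin


lemma tangent_le:
  fixes s :: "real \<Rightarrow> real"
  assumes conc: "strict_concave_on {0..B} s"
    and der: "(s has_real_derivative d) (at a within {0..B})"
    and a: "a \<in> {0..B}" and y: "y \<in> {0..B}"
  shows "s y \<le> s a + d * (y - a)"
proof (cases "y = a")
  case True then show ?thesis by simp
next
  case False
  define z where "z u = a + u * (y - a)" for u :: real
  have lim1: "((\<lambda>w. (s w - s a) / (w - a)) \<longlongrightarrow> d) (at a within {0..B})"
    using der has_field_derivative_iff by blast
  have zin: "z u \<in> {0..B}" if "0 < u" "u < 1" for u
  proof -
    have "z u = u * y + (1 - u) * a" by (simp add: z_def algebra_simps)
    moreover have "u * y + (1 - u) * a \<in> {0..B}"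
    proof -
      have "u * y \<le> u * B" "(1 - u) * a \<le> (1 - u) * B"
        using a y that by (auto intro: mult_left_mono)
      moreover have "0 \<le> u * y" "0 \<le> (1 - u) * a" using a y that by auto
      ultimately show ?thesis by (auto simp: algebra_simps)
    qed
    ultimately show ?thesis by simp
  qed
  have ev01: "eventually (\<lambda>u. 0 < u \<and> u < (1::real)) (at_right 0)"
    using eventually_at_right_real[of 0 1] by simp
  have "filterlim z (at a within {0..B}) (at_right 0)"
    unfolding filterlim_at
  proof
    show "eventually (\<lambda>u. z u \<in> {0..B} \<and> z u \<noteq> a) (at_right 0)"
      using ev01 by eventually_elim (use zin False in \<open>auto simp: z_def\<close>)
    have "((\<lambda>u. a + u * (y - a)) \<longlongrightarrow> a + 0 * (y - a)) (at_right 0)"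
      by (intro tendsto_intros)
    then show "(z \<longlongrightarrow> a) (at_right 0)" unfolding z_def by simp
  qed
  from filterlim_compose[OF lim1 this]
  have "((\<lambda>u. (s (z u) - s a) / (z u - a) * (y - a)) \<longlongrightarrow> d * (y - a)) (at_right 0)"
    by (intro tendsto_intros) 
  moreover have "eventually (\<lambda>u. s y - s a \<le> (s (z u) - s a) / (z u - a) * (y - a)) (at_right 0)"
    using ev01
  proof eventually_elim
    case (elim u)
    have zeq: "z u = u * y + (1 - u) * a" by (simp add: z_def algebra_simps)
    have "s (z u) > u * s y + (1 - u) * s a"
      unfolding zeq using conc a y False elim unfolding strict_concave_on_def by auto
    then have h1: "s (z u) - s a > u * (s y - s a)" by (simp add: algebra_simps)
    have h2: "(s (z u) - s a) / (z u - a) * (y - a) = (s (z u) - s a) / u"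
      using False elim by (simp add: z_def field_simps)
    have "s y - s a < (s (z u) - s a) / u" using h1 elim by (simp add: field_simps)
    then show ?case using h2 by linarith
  qed
  ultimately have "s y - s a \<le> d * (y - a)"
    by (intro tendsto_lowerbound) auto
  then show ?thesis by simp
qed

lemma tangent_less:
  fixes s :: "real \<Rightarrow> real"
  assumes conc: "strict_concave_on {0..B} s"
    and der: "(s has_real_derivative d) (at a within {0..B})"
    and a: "a \<in> {0..B}" and y: "y \<in> {0..B}" and ne: "y \<noteq> a"
  shows "s y < s a + d * (y - a)"
proof -
  define z where "z = (1/2) * y + (1 - 1/2) * a"
  have zin: "z \<in> {0..B}" using a y by (auto simp: z_def)
  have "\<forall>u. 0 < u \<and> u < 1 \<longrightarrow> s (u * y + (1 - u) * a) > u * s y + (1 - u) * s a"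
    using conc a y ne unfolding strict_concave_on_def by blast
  then have "s z > (1/2) * s y + (1 - 1/2) * s a"
    unfolding z_def by (rule mp[OF spec[of _ "1/2"]]) simp
  moreover have "s z \<le> s a + d * (z - a)" by (rule tangent_le[OF conc der a zin])
  ultimately show ?thesis by (simp add: z_def algebra_simps)
qed


lemma cont_right_transform:
  fixes f g :: "real \<Rightarrow> real"
  assumes "continuous (at_right t) g" "eventually (\<lambda>u. f u = g u) (at_right t)" "f t = g t"
  shows "continuous (at_right t) f"
proof -
  have "(g \<longlongrightarrow> g t) (at_right t)" using assms(1) by (simp add: continuous_within)
  then have "(f \<longlongrightarrow> f t) (at_right t)"
    using assms(2,3) by (simp add: tendsto_cong)
  then show ?thesis by (simp add: continuous_within)
qed

lemma feasD:
  assumes "feasible_schedule M B s x \<theta> T"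
  shows feas_nonneg: "\<And>i t. i \<in> {1..M} \<Longrightarrow> t > 0 \<Longrightarrow> 0 \<le> \<theta> i t"
    and feas_leB: "\<And>i t. i \<in> {1..M} \<Longrightarrow> t > 0 \<Longrightarrow> \<theta> i t \<le> B"
    and feas_sum: "\<And>t. t > 0 \<Longrightarrow> (\<Sum>i=1..M. \<theta> i t) \<le> B"
    and feas_rc: "\<And>i t. i \<in> {1..M} \<Longrightarrow> t > 0 \<Longrightarrow> continuous (at_right t) (\<theta> i)"
    and feas_int: "\<And>i. i \<in> {1..M} \<Longrightarrow> ((\<lambda>t. s (\<theta> i t)) has_integral x i) {0..T i}"
    and feas_zero: "\<And>i t. i \<in> {1..M} \<Longrightarrow> t > T i \<Longrightarrow> \<theta> i t = 0"
  using assms unfolding feasible_schedule_def by blast+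

lemma T_pos:
  assumes "feasible_schedule M B s x \<theta> T" "i \<in> {1..M}" "x i > 0"
  shows "T i > 0"
proof (rule ccontr)
  assume nT: "\<not> T i > 0"
  have int: "((\<lambda>t. s (\<theta> i t)) has_integral x i) {0..T i}"
    by (rule feas_int[OF assms(1,2)])
  show False
  proof (cases "T i = 0")
    case True
    have "((\<lambda>t. s (\<theta> i t)) has_integral 0) {0..T i}" unfolding True
      using has_integral_refl(1)[of "\<lambda>t. s (\<theta> i t)" 0] by (simp add: cbox_interval)
    from has_integral_unique[OF int this] show False using assms(3) by simp
  next
    case False
    then have "{0..T i} = {}" using nT by simp
    then show False using int assms(3) by simp
  qed
qed

lemma theta_zero:
  assumes feas: "feasible_schedule M B s x \<theta> T" and i: "i \<in> {1..M}" and Tp: "T i > 0" and t: "t \<ge> T i"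
  shows "\<theta> i t = 0"
proof (cases "t > T i")
  case True then show ?thesis by (rule feas_zero[OF feas i])
next
  case False
  then have tT: "t = T i" using t by simp
  have "continuous (at_right t) (\<theta> i)" by (rule feas_rc[OF feas i]) (use tT Tp in simp)
  then have l1: "(\<theta> i \<longlongrightarrow> \<theta> i t) (at_right t)" by (simp add: continuous_within)
  have "eventually (\<lambda>u. \<theta> i u = 0) (at_right t)"
    unfolding eventually_at_right_field
    by (intro exI[of _ "t+1"]) (use feas_zero[OF feas i] tT in simp)
  then have "(\<theta> i \<longlongrightarrow> 0) (at_right t)"
    by (simp add: tendsto_cong)
  from tendsto_unique[OF _ l1 this] show ?thesis by simp
qed

lemma inv_mono_exists:
  fixes s :: "real \<Rightarrow> real"
  assumes sm: "strict_mono_on {0..B} s" and B: "B \<ge> 0"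
  obtains g where "mono g" "\<And>v. v \<in> {0..B} \<Longrightarrow> g (s v) = v"
proof -
  define g where "g y = Sup ({0} \<union> {x\<in>{0..B}. s x \<le> y})" for y
  have gm: "mono g"
  proof (rule monoI)
    fix y1 y2 :: real assume "y1 \<le> y2"
    then show "g y1 \<le> g y2" unfolding g_def
      by (intro cSup_subset_mono) (auto simp: bdd_above_def intro!: exI[of _ "max 0 B"])
  qed
  have gs: "g (s v) = v" if v: "v \<in> {0..B}" for v
  proof -
  have le: "s x \<le> s v \<longleftrightarrow> x \<le> v" if x: "x \<in> {0..B}" for x
  proof
    assume "s x \<le> s v" then show "x \<le> v"
      using sm v x by (metis not_le strict_mono_onD)
  next
    assume "x \<le> v" then show "s x \<le> s v"
      using sm v x by (metis order_le_less strict_mono_onD)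
  qed
  have "{0} \<union> {x\<in>{0..B}. s x \<le> s v} = {0..v}"
    using le v by auto
  then show "g (s v) = v" unfolding g_def using v by simp
  qed
  show ?thesis by (rule that[OF gm gs])
qed

lemma theta_integrable:
  fixes s :: "real \<Rightarrow> real"
  assumes feas: "feasible_schedule M B s x \<theta> T" and i: "i \<in> {1..M}"
    and sm: "strict_mono_on {0..B} s" and B: "B \<ge> 0"
    and ab: "0 < a" "a \<le> b" "b \<le> T i"
  shows "\<theta> i integrable_on {a..b}"
proof -
  obtain g where gm: "mono g" and gs: "\<And>v. v \<in> {0..B} \<Longrightarrow> g (s v) = v"
    using inv_mono_exists[OF sm B] by blast
  have "(\<lambda>t. s (\<theta> i t)) integrable_on {0..T i}"
    using feas_int[OF feas i] by blast
  then have "(\<lambda>t. s (\<theta> i t)) integrable_on {a..b}"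
    by (rule integrable_subinterval_real) (use ab in auto)
  then have m1: "(\<lambda>t. s (\<theta> i t)) \<in> borel_measurable (lebesgue_on {a..b})"
    by (rule integrable_imp_measurable)
  have "g \<in> borel_measurable borel" using gm by (rule borel_measurable_mono)
  then have m2: "(\<lambda>t. g (s (\<theta> i t))) \<in> borel_measurable (lebesgue_on {a..b})"
    using m1 by (intro measurable_compose[OF m1]) auto
  have bnd: "\<theta> i t \<in> {0..B}" if t: "t \<in> {a..b}" for t
    using feas_nonneg[OF feas i] feas_leB[OF feas i] t ab by simp
  have eqg: "\<theta> i t = g (s (\<theta> i t))" if t: "t \<in> {a..b}" for t
    by (rule gs[OF bnd[OF t], symmetric])
  have "\<theta> i \<in> borel_measurable (lebesgue_on {a..b}) \<longleftrightarrow>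
        (\<lambda>t. g (s (\<theta> i t))) \<in> borel_measurable (lebesgue_on {a..b})"
    by (rule measurable_cong) (use eqg in \<open>simp add: space_restrict_space\<close>)
  then have m3: "\<theta> i \<in> borel_measurable (lebesgue_on {a..b})" using m2 by simp
  have ib: "(\<lambda>_. B) integrable_on {a..b}" by (rule integrable_const_ivl)
  have ab2: "\<bar>\<theta> i t\<bar> \<le> B" if t: "t \<in> {a..b}" for t using bnd[OF t] by simp
  have S: "{a..b} \<in> sets lebesgue" by (rule fmeasurableD[OF lmeasurable_interval(1)])
  show ?thesis
    by (rule measurable_bounded_by_integrable_imp_integrable_real[OF m3 ib ab2 S])
qed


lemma truncate:
  fixes s \<phi> :: "real \<Rightarrow> real"
  assumes bnd: "\<forall>t>0. 0 \<le> \<phi> t \<and> \<phi> t \<le> B"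
    and rc: "\<forall>t>0. continuous (at_right t) \<phi>"
    and int: "((\<lambda>t. s (\<phi> t)) has_integral X) {0..Tj}"
    and ge: "X \<ge> xj" and xpos: "xj > 0" and s0: "s 0 = 0"
  obtains T' where "0 < T'" "T' \<le> Tj" "X > xj \<Longrightarrow> T' < Tj"
    "((\<lambda>t. s (if t < T' then \<phi> t else 0)) has_integral xj) {0..T'}"
    "\<forall>t>0. 0 \<le> (if t < T' then \<phi> t else 0) \<and> (if t < T' then \<phi> t else 0) \<le> \<phi> t"
    "\<forall>t>0. continuous (at_right t) (\<lambda>t. if t < T' then \<phi> t else 0)"
proof -
  have Tj0: "0 \<le> Tj"
  proof (rule ccontr)
    assume "\<not> 0 \<le> Tj"
    then have "{0..Tj} = {}" by auto
    then show False using int ge xpos by auto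
  qed
  define G where "G t = integral {0..t} (\<lambda>t. s (\<phi> t))" for t
  have intg: "(\<lambda>t. s (\<phi> t)) integrable_on {0..Tj}" using int by blast
  have cont: "continuous_on {0..Tj} G" unfolding G_def by (rule indefinite_integral_continuous_1[OF intg])
  have G0: "G 0 = 0" by (simp add: G_def)
  have GT: "G Tj = X" using int by (simp add: G_def integral_unique)
  obtain T' where T': "0 \<le> T'" "T' \<le> Tj" "G T' = xj"
    using IVT'[of G 0 xj Tj] cont G0 GT ge xpos Tj0 by auto
  have Tp: "0 < T'" using G0 T' xpos by (cases "T' = 0") auto
  have "(\<lambda>t. s (\<phi> t)) integrable_on {0..T'}"
    by (rule integrable_subinterval_real[OF intg]) (use T' in auto)
  then have i1: "((\<lambda>t. s (\<phi> t)) has_integral xj) {0..T'}"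
    using T' by (metis G_def has_integral_integral)
  have i2: "((\<lambda>t. s (if t < T' then \<phi> t else 0)) has_integral xj) {0..T'}"
    by (rule has_integral_spike_finite[OF _ _ i1, of "{T'}"]) auto
  have strict: "T' < Tj" if "X > xj"
    using T' GT that by (cases "T' = Tj") auto
  have nn: "\<forall>t>0. 0 \<le> (if t < T' then \<phi> t else 0) \<and> (if t < T' then \<phi> t else 0) \<le> \<phi> t"
    using bnd by auto
  have rc2: "\<forall>t>0. continuous (at_right t) (\<lambda>t. if t < T' then \<phi> t else 0)"
  proof (intro allI impI)
    fix t :: real assume t: "t > 0"
    show "continuous (at_right t) (\<lambda>t. if t < T' then \<phi> t else 0)"
    proof (cases "t < T'")
      case True
      have "eventually (\<lambda>u. (if u < T' then \<phi> u else 0) = \<phi> u) (at_right t)"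
        unfolding eventually_at_right_field using True by (intro exI[of _ T']) auto
      moreover have c1: "continuous (at_right t) \<phi>" using rc t by blast
      ultimately show ?thesis using cont_right_transform[OF c1] True by simp
    next
      case False
      have "eventually (\<lambda>u. (if u < T' then \<phi> u else 0) = (\<lambda>_. 0) u) (at_right t)"
        unfolding eventually_at_right_field using False by (intro exI[of _ "t+1"]) auto
      moreover have c1: "continuous (at_right t) (\<lambda>_::real. 0::real)" by (rule continuous_const)
      ultimately show ?thesis using cont_right_transform[OF c1] False by simp
    qed
  qed
  show ?thesis by (rule that[OF Tp T'(2) strict i2 nn rc2])
qed



lemma core:
  fixes s s' :: "real \<Rightarrow> real"
  assumes opt: "optimal_schedule M B s x w \<theta> T"
    and B: "B > 0" and s0: "s 0 = 0" and sm: "strict_mono_on {0..B} s"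
    and conc: "strict_concave_on {0..B} s"
    and der: "\<And>y. y \<in> {0..B} \<Longrightarrow> (s has_real_derivative s' y) (at y within {0..B})"
    and x_pos: "\<And>i. i \<in> {1..M} \<Longrightarrow> x i > 0"
    and w_pos: "\<And>i. i \<in> {1..M} \<Longrightarrow> w i > 0"
    and t1: "0 < t1" "t1 < c"
    and sep: "\<And>i. i \<in> {1..M} \<Longrightarrow> T i \<le> t1 \<or> c < T i"
    and i0: "i0 \<in> {1..M}" "c < T i0" and t0: "t1 \<le> t0" "t0 < c"
  shows "\<theta> i0 t0 = integral {t1..c} (\<theta> i0) / (c - t1)"
proof (rule ccontr)
  assume ne: "\<theta> i0 t0 \<noteq> integral {t1..c} (\<theta> i0) / (c - t1)"
  have feas: "feasible_schedule M B s x \<theta> T"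
    and minc: "\<And>\<theta>' T'. feasible_schedule M B s x \<theta>' T' \<Longrightarrow> total_cost M w T \<le> total_cost M w T'"
    using opt unfolding optimal_schedule_def by blast+
  define L where "L = c - t1"
  have L: "L > 0" using t1 by (simp add: L_def)
  have constI: "((\<lambda>_. k) has_integral (L * k)) {t1..c}" for k
    using has_integral_const_real[of k t1 c] t1 by (simp add: L_def)
  define ab where "ab i = (if c < T i then integral {t1..c} (\<theta> i) / L else 0)" for i
  have Tpos: "\<And>i. i \<in> {1..M} \<Longrightarrow> T i > 0" using T_pos[OF feas] x_pos by blast
  have intth: "\<theta> i integrable_on {t1..c}" if i: "i \<in> {1..M}" "c < T i" for i
    by (rule theta_integrable[OF feas i(1) sm]) (use B t1 i in auto)
  have thrng: "0 \<le> \<theta> i t \<and> \<theta> i t \<le> B" if "i \<in> {1..M}" "t > 0" for i t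
    using feas_nonneg[OF feas that] feas_leB[OF feas that] by simp
  have ab_rng: "0 \<le> ab i \<and> ab i \<le> B" if i: "i \<in> {1..M}" for i
  proof (cases "c < T i")
    case True
    have ge: "0 \<le> integral {t1..c} (\<theta> i)"
      by (rule has_integral_nonneg[OF integrable_integral[OF intth[OF i True]]]) (use thrng[OF i] t1 in auto)
    have "integral {t1..c} (\<theta> i) \<le> integral {t1..c} (\<lambda>_. B)"
      by (rule integral_le[OF intth[OF i True]]) (use thrng[OF i] t1 in auto)
    then have le: "integral {t1..c} (\<theta> i) \<le> L * B" using integral_unique[OF constI[of B]] t1 unfolding L_def by simp
    show ?thesis using ge le L True by (simp add: ab_def field_simps)
  next
    case False then show ?thesis using B by (simp add: ab_def)
  qed
  define f where "f i t = (if c < T i then \<theta> i t else 0)" for i t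
  have fint: "(f i has_integral (L * ab i)) {t1..c}" if i: "i \<in> {1..M}" for i
  proof (cases "c < T i")
    case True
    then have "f i = \<theta> i" by (simp add: f_def fun_eq_iff)
    then show ?thesis using intth[OF i True] L True by (simp add: ab_def has_integral_integral)
  next
    case False
    then have "f i = (\<lambda>_. 0)" by (simp add: f_def fun_eq_iff)
    then show ?thesis using False by (simp add: ab_def)
  qed
  have ab_sum: "(\<Sum>i=1..M. ab i) \<le> B"
  proof -
    have "((\<lambda>t. \<Sum>i=1..M. f i t) has_integral (\<Sum>i=1..M. L * ab i)) {t1..c}"
      by (rule has_integral_sum) (use fint in auto)
    moreover have "((\<lambda>_. B) has_integral (L * B)) {t1..c}"
      by (rule constI)
    moreover have "(\<Sum>i=1..M. f i t) \<le> B" if t: "t \<in> {t1..c}" for t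
    proof -
      have "(\<Sum>i=1..M. f i t) \<le> (\<Sum>i=1..M. \<theta> i t)"
        by (rule sum_mono) (use thrng t t1 in \<open>auto simp: f_def\<close>)
      also have "\<dots> \<le> B" using feas_sum[OF feas] t t1 by simp
      finally show ?thesis .
    qed
    ultimately have "(\<Sum>i=1..M. L * ab i) \<le> L * B"
      by (rule has_integral_le)
    then have "L * (\<Sum>i=1..M. ab i) \<le> L * B" by (simp add: sum_distrib_left)
    then show ?thesis using L by simp
  qed
  define \<phi> where "\<phi> i t = (if c < T i \<and> t1 \<le> t \<and> t < c then ab i else \<theta> i t)" for i t
  have phi_rng: "0 \<le> \<phi> i t \<and> \<phi> i t \<le> B" if "i \<in> {1..M}" "t > 0" for i t
    using ab_rng[OF that(1)] thrng[OF that] by (simp add: \<phi>_def)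
  have inact0: "\<theta> i t = 0" if i: "i \<in> {1..M}" "\<not> c < T i" and t: "t1 \<le> t" for i t
    by (rule theta_zero[OF feas i(1) Tpos[OF i(1)]]) (use sep[OF i(1)] i t in auto)
  have phi_sum: "(\<Sum>i=1..M. \<phi> i t) \<le> B" if t: "t > 0" for t
  proof (cases "t1 \<le> t \<and> t < c")
    case True
    have "(\<Sum>i=1..M. \<phi> i t) = (\<Sum>i=1..M. ab i)"
    proof (rule sum.cong)
      fix i assume i: "i \<in> {1..M}"
      show "\<phi> i t = ab i"
        using True inact0[OF i] by (cases "c < T i") (auto simp: \<phi>_def ab_def)
    qed simp
    then show ?thesis using ab_sum by simp
  next
    case False
    then have "(\<Sum>i=1..M. \<phi> i t) = (\<Sum>i=1..M. \<theta> i t)"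
      by (intro sum.cong) (auto simp: \<phi>_def)
    then show ?thesis using feas_sum[OF feas t] by simp
  qed
  have phi_rc: "continuous (at_right t) (\<phi> i)" if i: "i \<in> {1..M}" and t: "t > 0" for i t
  proof (cases "c < T i")
    case False
    then have "\<phi> i = \<theta> i" by (simp add: \<phi>_def fun_eq_iff)
    then show ?thesis using feas_rc[OF feas i t] by simp
  next
    case act: True
    have rct: "continuous (at_right t) (\<theta> i)" by (rule feas_rc[OF feas i t])
    consider "t < t1" | "t1 \<le> t \<and> t < c" | "c \<le> t" by linarith
    then show ?thesis
    proof cases
      case 1
      have "eventually (\<lambda>u. \<phi> i u = \<theta> i u) (at_right t)"
        unfolding eventually_at_right_field using 1 by (intro exI[of _ t1]) (auto simp: \<phi>_def)
      then show ?thesis using cont_right_transform[OF rct] 1 by (simp add: \<phi>_def)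
    next
      case 2
      have c1: "continuous (at_right t) (\<lambda>_::real. ab i)" by (rule continuous_const)
      have "eventually (\<lambda>u. \<phi> i u = ab i) (at_right t)"
        unfolding eventually_at_right_field using 2 act by (intro exI[of _ c]) (auto simp: \<phi>_def)
      then show ?thesis using cont_right_transform[OF c1] 2 act by (simp add: \<phi>_def)
    next
      case 3
      have "eventually (\<lambda>u. \<phi> i u = \<theta> i u) (at_right t)"
        unfolding eventually_at_right_field using 3 by (intro exI[of _ "t+1"]) (auto simp: \<phi>_def)
      then show ?thesis using cont_right_transform[OF rct] 3 by (simp add: \<phi>_def)
    qed
  qed
  define e where "e i = L * s (ab i) - integral {t1..c} (\<lambda>t. s (\<theta> i t))" for i
  have phi_int: "((\<lambda>t. s (\<phi> i t)) has_integral (x i + (if c < T i then e i else 0))) {0..T i}"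
    if i: "i \<in> {1..M}" for i
  proof (cases "c < T i")
    case False
    then have "\<phi> i = \<theta> i" by (simp add: \<phi>_def fun_eq_iff)
    then show ?thesis using feas_int[OF feas i] False by simp
  next
    case act: True
    define F where "F = (\<lambda>t. s (\<theta> i t))"
    have FI: "(F has_integral x i) {0..T i}" using feas_int[OF feas i] by (simp add: F_def)
    have Fint: "F integrable_on {0..T i}" using FI by blast
    have F1: "(F has_integral integral {0..t1} F) {0..t1}"
      by (rule integrable_integral, rule integrable_subinterval_real[OF Fint]) (use t1 act in auto)
    have F2: "(F has_integral integral {t1..c} F) {t1..c}"
      by (rule integrable_integral, rule integrable_subinterval_real[OF Fint]) (use t1 act in auto)
    have F3: "(F has_integral integral {c..T i} F) {c..T i}"
      by (rule integrable_integral, rule integrable_subinterval_real[OF Fint]) (use t1 act in auto)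
    have F12: "(F has_integral (integral {0..t1} F + integral {t1..c} F)) {0..c}"
      by (rule has_integral_combine[OF _ _ F1 F2]) (use t1 in auto)
    have "(F has_integral (integral {0..t1} F + integral {t1..c} F + integral {c..T i} F)) {0..T i}"
      by (rule has_integral_combine[OF _ _ F12 F3]) (use t1 act in auto)
    then have sumx: "integral {0..t1} F + integral {t1..c} F + integral {c..T i} F = x i"
      using FI has_integral_unique by blast
    have P1: "((\<lambda>t. s (\<phi> i t)) has_integral integral {0..t1} F) {0..t1}"
      by (rule has_integral_spike_finite[OF _ _ F1, of "{t1}"]) (auto simp: \<phi>_def F_def)
    have P2c: "((\<lambda>_. s (ab i)) has_integral (L * s (ab i))) {t1..c}" by (rule constI)
    have P2: "((\<lambda>t. s (\<phi> i t)) has_integral (L * s (ab i))) {t1..c}"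
      by (rule has_integral_spike_finite[OF _ _ P2c, of "{c}"]) (use act in \<open>auto simp: \<phi>_def\<close>)
    have P3: "((\<lambda>t. s (\<phi> i t)) has_integral integral {c..T i} F) {c..T i}"
      by (rule has_integral_spike_finite[OF _ _ F3, of "{}"]) (auto simp: \<phi>_def F_def)
    have P12: "((\<lambda>t. s (\<phi> i t)) has_integral (integral {0..t1} F + L * s (ab i))) {0..c}"
      by (rule has_integral_combine[OF _ _ P1 P2]) (use t1 in auto)
    have "((\<lambda>t. s (\<phi> i t)) has_integral (integral {0..t1} F + L * s (ab i) + integral {c..T i} F)) {0..T i}"
      by (rule has_integral_combine[OF _ _ P12 P3]) (use t1 act in auto)
    moreover have "integral {0..t1} F + L * s (ab i) + integral {c..T i} F = x i + (if c < T i then e i else 0)"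
      using sumx act by (simp add: e_def F_def)
    ultimately show ?thesis by simp
  qed
  have h_int: "((\<lambda>t. s (ab i) + s' (ab i) * (\<theta> i t - ab i) - s (\<theta> i t)) has_integral e i) {t1..c}"
    if i: "i \<in> {1..M}" "c < T i" for i
  proof -
    define a where "a = ab i"
    define d where "d = s' a"
    have Ith: "(\<theta> i has_integral (L * a)) {t1..c}"
      using intth[OF i] L i(2) by (simp add: a_def ab_def has_integral_integral)
    have Fi: "((\<lambda>t. s (\<theta> i t)) has_integral integral {t1..c} (\<lambda>t. s (\<theta> i t))) {t1..c}"
      by (rule integrable_integral, rule integrable_subinterval_real[OF has_integral_integrable[OF feas_int[OF feas i(1)]]])
         (use t1 i in auto)
    have A1: "((\<lambda>t. \<theta> i t - a) has_integral (L * a - L * a)) {t1..c}"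
      by (rule has_integral_diff[OF Ith constI])
    have A2: "((\<lambda>t. d * (\<theta> i t - a)) has_integral (d * (L * a - L * a))) {t1..c}"
      by (rule has_integral_mult_right[OF A1])
    have A3: "((\<lambda>t. s a + d * (\<theta> i t - a)) has_integral (L * s a + d * (L * a - L * a))) {t1..c}"
      by (rule has_integral_add[OF constI A2])
    have A4: "((\<lambda>t. s a + d * (\<theta> i t - a) - s (\<theta> i t)) has_integral
               (L * s a + d * (L * a - L * a) - integral {t1..c} (\<lambda>t. s (\<theta> i t)))) {t1..c}"
      by (rule has_integral_diff[OF A3 Fi])
    then show ?thesis by (simp add: a_def d_def e_def)
  qed
  have h_nn: "0 \<le> s (ab i) + s' (ab i) * (\<theta> i t - ab i) - s (\<theta> i t)"
    if i: "i \<in> {1..M}" and t: "t \<in> {t1..c}" for i t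
  proof -
    have abr: "ab i \<in> {0..B}" using ab_rng[OF i] by simp
    have yr: "\<theta> i t \<in> {0..B}" using thrng[OF i] t t1 by simp
    show ?thesis using tangent_le[OF conc der[OF abr] abr yr] by simp
  qed
  have e_nn: "0 \<le> e i" if i: "i \<in> {1..M}" "c < T i" for i
    by (rule has_integral_nonneg[OF h_int[OF i]]) (use h_nn i in auto)
  have e_pos: "0 < e i0"
  proof -
    define a where "a = ab i0"
    define hf where "hf y = s a + s' a * (y - a) - s y" for y
    have abr: "a \<in> {0..B}" using ab_rng[OF i0(1)] by (simp add: a_def)
    have y0r: "\<theta> i0 t0 \<in> {0..B}" using thrng[OF i0(1)] t0 t1 by simp
    have nea: "\<theta> i0 t0 \<noteq> a" using ne i0 by (simp add: a_def ab_def L_def)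
    define h0 where "h0 = hf (\<theta> i0 t0)"
    have h0: "h0 > 0" using tangent_less[OF conc der[OF abr] abr y0r nea] by (simp add: h0_def hf_def)
    have scont: "continuous_on {0..B} s" by (rule DERIV_continuous_on[OF der])
    have hcont: "continuous_on {0..B} hf" unfolding hf_def
      by (intro continuous_intros scont)
    then have hc: "continuous (at (\<theta> i0 t0) within {0..B}) hf"
      using y0r continuous_on_eq_continuous_within by blast
    have ev: "eventually (\<lambda>u. \<theta> i0 u \<in> {0..B}) (at_right t0)"
      unfolding eventually_at_right_field
      by (intro exI[of _ "t0+1"]) (use thrng[OF i0(1)] t0 t1 in auto)
    have lim: "(\<theta> i0 \<longlongrightarrow> \<theta> i0 t0) (at_right t0)"
      using feas_rc[OF feas i0(1)] t0 t1 by (simp add: continuous_within)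
    have "((\<lambda>u. hf (\<theta> i0 u)) \<longlongrightarrow> h0) (at_right t0)"
      unfolding h0_def by (rule continuous_within_tendsto_compose[OF hc ev lim])
    then have "eventually (\<lambda>u. hf (\<theta> i0 u) > h0 / 2) (at_right t0)"
      by (rule order_tendstoD(1)) (use h0 in simp)
    then obtain b where b: "b > t0" and bP: "\<And>u. u > t0 \<Longrightarrow> u < b \<Longrightarrow> hf (\<theta> i0 u) > h0 / 2"
      unfolding eventually_at_right_field by blast
    define r where "r = (t0 + min b c) / 2"
    have r: "t0 < r" "r < c" "r < b" using b t0 by (auto simp: r_def)
    define h where "h = (\<lambda>t. s a + s' a * (\<theta> i0 t - a) - s (\<theta> i0 t))"
    have hI: "(h has_integral e i0) {t1..c}"
      using h_int[OF i0] by (simp add: h_def a_def)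
    have hint: "h integrable_on {t1..c}" using hI by blast
    have hint2: "h integrable_on {t0..r}"
      by (rule integrable_subinterval_real[OF hint]) (use r t0 in auto)
    have hge: "h0 / 2 \<le> h u" if u: "u \<in> {t0..r}" for u
    proof (cases "u = t0")
      case True then show ?thesis using h0 by (simp add: h_def h0_def hf_def)
    next
      case False
      then have "u > t0" "u < b" using u r by auto
      from bP[OF this] show ?thesis by (simp add: h_def hf_def)
    qed
    have cI: "((\<lambda>_. h0 / 2) has_integral ((r - t0) * (h0 / 2))) {t0..r}"
      using has_integral_const_real[of "h0/2" t0 r] r by simp
    have "(r - t0) * (h0 / 2) \<le> integral {t0..r} h"
      by (rule has_integral_le[OF cI integrable_integral[OF hint2]]) (use hge in auto)
    also have "\<dots> \<le> integral {t1..c} h"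
    proof (rule integral_subset_le[OF _ hint2 hint])
      show "{t0..r} \<subseteq> {t1..c}" using r t0 by auto
      show "\<forall>u\<in>{t1..c}. 0 \<le> h u"
      proof
        fix u assume u: "u \<in> {t1..c}"
        show "0 \<le> h u" using h_nn[OF i0(1) u] by (simp add: h_def a_def)
      qed
    qed
    also have "\<dots> = e i0" using hI by (rule integral_unique)
    finally have "(r - t0) * (h0 / 2) \<le> e i0" .
    moreover have "0 < (r - t0) * (h0 / 2)" using r h0 by simp
    ultimately show ?thesis by linarith
  qed
  define X where "X i = x i + (if c < T i then e i else 0)" for i
  have Xge: "x i \<le> X i" if i: "i \<in> {1..M}" for i
    using e_nn[OF i] by (cases "c < T i") (auto simp: X_def)
  have X0: "X i0 > x i0" using e_pos i0 by (simp add: X_def)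
  define P where "P i T' \<longleftrightarrow> 0 < T' \<and> T' \<le> T i \<and> (X i > x i \<longrightarrow> T' < T i) \<and>
      ((\<lambda>t. s (if t < T' then \<phi> i t else 0)) has_integral x i) {0..T'} \<and>
      (\<forall>t>0. 0 \<le> (if t < T' then \<phi> i t else 0) \<and> (if t < T' then \<phi> i t else 0) \<le> \<phi> i t) \<and>
      (\<forall>t>0. continuous (at_right t) (\<lambda>t. if t < T' then \<phi> i t else 0))" for i T'
  have "\<exists>T'. P i T'" if i: "i \<in> {1..M}" for i
  proof -
    have bnd: "\<forall>t>0. 0 \<le> \<phi> i t \<and> \<phi> i t \<le> B" using phi_rng[OF i] by blast
    have rc: "\<forall>t>0. continuous (at_right t) (\<phi> i)" using phi_rc[OF i] by blast
    have int: "((\<lambda>t. s (\<phi> i t)) has_integral X i) {0..T i}" using phi_int[OF i] by (simp add: X_def)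
    obtain T' where "0 < T'" "T' \<le> T i" "X i > x i \<Longrightarrow> T' < T i"
      "((\<lambda>t. s (if t < T' then \<phi> i t else 0)) has_integral x i) {0..T'}"
      "\<forall>t>0. 0 \<le> (if t < T' then \<phi> i t else 0) \<and> (if t < T' then \<phi> i t else 0) \<le> \<phi> i t"
      "\<forall>t>0. continuous (at_right t) (\<lambda>t. if t < T' then \<phi> i t else 0)"
      by (rule truncate[OF bnd rc int Xge[OF i] x_pos[OF i] s0]) blast
    then have "P i T'" unfolding P_def by blast
    then show ?thesis by blast
  qed
  then have "\<forall>i\<in>{1..M}. \<exists>T'. P i T'" by blast
  then obtain Tn where Tn: "\<And>i. i \<in> {1..M} \<Longrightarrow> P i (Tn i)" using bchoice by metis
  define thn where "thn i t = (if t < Tn i then \<phi> i t else 0)" for i t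
  have feasn: "feasible_schedule M B s x thn Tn"
    unfolding feasible_schedule_def
  proof (intro conjI ballI allI impI)
    fix i and t :: real assume i: "i \<in> {1..M}" and t: "0 < t"
    show "0 \<le> thn i t" using Tn[OF i] t unfolding P_def thn_def by blast
    show "thn i t \<le> B" using Tn[OF i] t phi_rng[OF i t] unfolding P_def thn_def by fastforce
  next
    fix t :: real assume t: "0 < t"
    have "(\<Sum>i=1..M. thn i t) \<le> (\<Sum>i=1..M. \<phi> i t)"
      by (rule sum_mono) (use Tn t in \<open>auto simp: P_def thn_def\<close>)
    then show "(\<Sum>i=1..M. thn i t) \<le> B" using phi_sum[OF t] by linarith
  next
    fix i and t :: real assume i: "i \<in> {1..M}" and t: "0 < t"
    have "\<forall>t>0. continuous (at_right t) (\<lambda>t. if t < Tn i then \<phi> i t else 0)"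
      using Tn[OF i] unfolding P_def by blast
    then show "continuous (at_right t) (thn i)" using t unfolding thn_def by blast
  next
    fix i assume i: "i \<in> {1..M}"
    show "((\<lambda>t. s (thn i t)) has_integral x i) {0..Tn i}"
      using Tn[OF i] unfolding P_def thn_def by blast
  next
    fix i and t :: real assume i: "i \<in> {1..M}" and t: "Tn i < t"
    show "thn i t = 0" using t by (simp add: thn_def)
  qed
  have "total_cost M w Tn < total_cost M w T"
    unfolding total_cost_def
  proof (rule sum_strict_mono_ex1)
    show "\<forall>i\<in>{1..M}. w i * Tn i \<le> w i * T i"
    proof
      fix i assume i: "i \<in> {1..M}"
      have "Tn i \<le> T i" using Tn[OF i] unfolding P_def by blast
      then show "w i * Tn i \<le> w i * T i" using w_pos[OF i] by (simp add: mult_left_mono)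
    qed
    have "Tn i0 < T i0" using Tn[OF i0(1)] X0 unfolding P_def by blast
    then have "w i0 * Tn i0 < w i0 * T i0" using w_pos[OF i0(1)] by (simp add: mult_strict_left_mono)
    then show "\<exists>i\<in>{1..M}. w i * Tn i < w i * T i" using i0(1) by blast
  qed simp
  then show False using minc[OF feasn] by linarith
qed


lemma main_ordered:
  fixes s s' :: "real \<Rightarrow> real"
  assumes opt: "optimal_schedule M B s x w \<theta> T"
    and B: "B > 0" and s0: "s 0 = 0" and sm: "strict_mono_on {0..B} s"
    and conc: "strict_concave_on {0..B} s"
    and der: "\<And>y. y \<in> {0..B} \<Longrightarrow> (s has_real_derivative s' y) (at y within {0..B})"
    and x_pos: "\<And>i. i \<in> {1..M} \<Longrightarrow> x i > 0"
    and w_pos: "\<And>i. i \<in> {1..M} \<Longrightarrow> w i > 0"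
    and t1: "0 < t1" "t1 < t2"
    and same: "remaining_jobs M T t1 = remaining_jobs M T t2"
  shows "\<forall>i\<in>{1..M}. \<theta> i t1 = \<theta> i t2"
proof -
  have feas: "feasible_schedule M B s x \<theta> T"
    using opt unfolding optimal_schedule_def by blast
  define A where "A = {i\<in>{1..M}. t2 < T i}"
  have sub: "A \<subseteq> {i\<in>{1..M}. t1 < T i}" using t1 by (auto simp: A_def)
  have eq: "A = {i\<in>{1..M}. t1 < T i}"
    by (rule card_subset_eq[OF _ sub]) (use same in \<open>auto simp: A_def remaining_jobs_def\<close>)
  define m where "m = Min (insert (t2 + 1) (T ` A))"
  have finA: "finite (insert (t2 + 1) (T ` A))" by (simp add: A_def)
  have m: "t2 < m" unfolding m_def using finA
    by (subst Min_gr_iff) (auto simp: A_def)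
  have mle: "m \<le> T i" if "i \<in> A" for i
    unfolding m_def using finA that by (intro Min_le) auto
  define c where "c = (t2 + m) / 2"
  have c: "t2 < c" "c < m" using m by (auto simp: c_def)
  have sep: "T i \<le> t1 \<or> c < T i" if i: "i \<in> {1..M}" for i
  proof (cases "t1 < T i")
    case True
    then have "i \<in> A" using eq i by blast
    then show ?thesis using mle c by fastforce
  qed simp
  show ?thesis
  proof
    fix i assume i: "i \<in> {1..M}"
    show "\<theta> i t1 = \<theta> i t2"
    proof (cases "c < T i")
      case True
      have "\<theta> i t1 = integral {t1..c} (\<theta> i) / (c - t1)"
        by (rule core[OF opt B s0 sm conc der x_pos w_pos _ _ sep i True]) (use t1 c in auto)
      moreover have "\<theta> i t2 = integral {t1..c} (\<theta> i) / (c - t1)"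
        by (rule core[OF opt B s0 sm conc der x_pos w_pos _ _ sep i True]) (use t1 c in auto)
      ultimately show ?thesis by simp
    next
      case False
      then have Ti: "T i \<le> t1" using sep[OF i] by simp
      have Tp: "T i > 0" by (rule T_pos[OF feas i x_pos[OF i]])
      show ?thesis
        using theta_zero[OF feas i Tp, of t1] theta_zero[OF feas i Tp, of t2] Ti t1 by simp
    qed
  qed
qed

theorem proposition7:
  fixes M :: nat and B :: real and s :: "real \<Rightarrow> real"
    and x w :: "nat \<Rightarrow> real" and \<theta> :: "nat \<Rightarrow> real \<Rightarrow> real" and T :: "nat \<Rightarrow> real"
    and t1 t2 :: real
  assumes B_pos: "B > 0"
    and s_ok: "speedup_fn B s"
    and x_dec: "\<And>i j. 1 \<le> i \<Longrightarrow> i \<le> j \<Longrightarrow> j \<le> M \<Longrightarrow> x j \<le> x i"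
    and x_pos: "\<And>i. i \<in> {1..M} \<Longrightarrow> x i > 0"
    and w_inc: "\<And>i j. 1 \<le> i \<Longrightarrow> i \<le> j \<Longrightarrow> j \<le> M \<Longrightarrow> w i \<le> w j"
    and w_pos: "\<And>i. i \<in> {1..M} \<Longrightarrow> w i > 0"
    and opt: "optimal_schedule M B s x w \<theta> T"
    and t1_pos: "t1 > 0" and t2_pos: "t2 > 0"
    and same_m: "remaining_jobs M T t1 = remaining_jobs M T t2"
  shows "\<forall>i\<in>{1..M}. \<theta> i t1 = \<theta> i t2"
proof -
  have s0: "s 0 = 0" and sm: "strict_mono_on {0..B} s" and conc: "strict_concave_on {0..B} s"
    using s_ok unfolding speedup_fn_def by blast+
  obtain s' where der: "\<And>y. y \<in> {0..B} \<Longrightarrow> (s has_real_derivative s' y) (at y within {0..B})"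
    using s_ok unfolding speedup_fn_def by blast
  consider "t1 < t2" | "t1 = t2" | "t2 < t1" by linarith
  then show ?thesis
  proof cases
    case 1
    show ?thesis by (rule main_ordered[OF opt B_pos s0 sm conc der x_pos w_pos t1_pos 1 same_m])
  next
    case 2
    then show ?thesis by simp
  next
    case 3
    have "\<forall>i\<in>{1..M}. \<theta> i t2 = \<theta> i t1"
      by (rule main_ordered[OF opt B_pos s0 sm conc der x_pos w_pos t2_pos 3 same_m[symmetric]])
    then show ?thesis by simp
  qed
qed

end
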